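(* Let $0\le\delta,\epsilon<1$, integers $d\ge0$, $n>0$, $m>1$, let $\psi_{AB}$ be an $m$-dimensional noisy maximally entangled state, and let $P,Q\in\mathcal{H}_m^{\otimes n}$ satisfy $\|P\|'_2\le1$, $\|Q\|'_2\le1$, $\|P^{>d}\|'^2_2\le\delta$, $\|Q^{>d}\|'^2_2\le\delta$. Let $\mathcal{A}=\{\mathcal{A}_i\}$, $\mathcal{B}=\{\mathcal{B}_i\}$ be standard orthonormal bases of $\mathcal{M}_m$ with $\mathrm{Tr}((\mathcal{A}_i\otimes\mathcal{B}_j)\psi_{AB})=c_i\delta_{i,j}$ for $i,j\in\{0,\ldots,m^2-1\}$, where $c_0\ge c_1\ge\cdots\ge c_{m^2-1}\ge0$ are the singular values of the correlation matrix, and write $P=\sum_\sigma\widehat P(\sigma)\mathcal{A}_\sigma$, $Q=\sum_\sigma\widehat Q(\sigma)\mathcal{B}_\sigma$. Then there is a set $H\subseteq[n]$ with $h=|H|\le\frac{2d}{\epsilon}$ such that $\mathrm{Inf}_i(P^{\le d})\le\epsilon$ and $\mathrm{Inf}_i(Q^{\le d})\le\epsilon$ for all $i\notin H$, and $$\mathrm{Tr}((P\otimes Q)\psi_{AB}^{\otimes n})=\sum_{\sigma\in\{0,\ldots,m^2-1\}^H}c_\sigma\,\mathrm{Tr}((P_\sigma\otimes Q_\sigma)\psi_{AB}^{\otimes(n-h)}),$$ where $c_\sigma=\prod_{i\in H}c_{\sigma_i}$, $P_\sigma=\sum_{\tau:\tau_H=\sigma}\widehat P(\tau)\mathcal{A}_{\tau_{H^c}}$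 and $Q_\sigma=\sum_{\tau:\tau_H=\sigma}\widehat Q(\tau)\mathcal{B}_{\tau_{H^c}}$ (operators on the registers in $H^c=[n]\setminus H$).
   Context: A standard orthonormal basis of $\mathcal{M}_m$ is an orthonormal basis (w.r.t. $\frac1m\mathrm{Tr}X^\dagger Y$) of Hermitian matrices with $\mathcal{B}_0=\mathrm{id}_m$; for $\sigma\in\{0,\ldots,m^2-1\}^n$, $\mathcal{B}_\sigma=\bigotimes_i\mathcal{B}_{\sigma_i}$, $|\sigma|=|\{i:\sigma_i\ne0\}|$, and $\tau_H$ denotes the restriction of $\tau$ to coordinates in $H$. Such bases with diagonal correlation exist. $\|X\|'_2=(\frac1{m^n}\mathrm{Tr}X^\dagger X)^{1/2}$. For $X=\sum_\sigma\widehat X(\sigma)\mathcal{B}_\sigma$: $X^{\le d}=\sum_{|\sigma|\le d}\widehat X(\sigma)\mathcal{B}_\sigma$, $X^{>d}=\sum_{|\sigma|>d}\widehat X(\sigma)\mathcal{B}_\sigma$, and $\mathrm{Inf}_i(X)=\sum_{\sigma:\sigma_i\ne0}|\widehat X(\sigma)|^2$ (all basis-independent). A noisy maximally entangled state is a state on $\mathbb{C}^m\otimes\mathbb{C}^m$ with maximally mixed marginals and maximal correlation $\rho(\psi_{AB})=\sup\{|\mathrm{Tr}((P^\dagger\otimes Q)\psi_{AB})|:\mathrm{Tr}P=\mathrm{Tr}Q=0,\ \tfrac1m\mathrm{Tr}P^\dagger P=\tfrac1m\mathrm{Tr}Q^\dagger Q=1\}<1$. *)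

theory Defs
  imports "HOL-Analysis.Analysis"
begin

text \<open>A single-site matrix in M_m is a function nat => nat => complex,
  meaningful on indices below m.  An operator on the registers S (a finite set of
  natural numbers, each register being C^m) is a function
  (nat => nat) => (nat => nat) => complex whose arguments are index tuples,
  i.e. elements of tuples S m (extensional functions S -> {..<m}).
  A state on C^m (x) C^m is a function (nat*nat) => (nat*nat) => complex.\<close>

type_synonym mat1 = "nat \<Rightarrow> nat \<Rightarrow> complex"
type_synonym opr = "(nat \<Rightarrow> nat) \<Rightarrow> (nat \<Rightarrow> nat) \<Rightarrow> complex"
type_synonym state2 = "nat \<times> nat \<Rightarrow> nat \<times> nat \<Rightarrow> complex"

definition tuples :: "nat set \<Rightarrow> nat \<Rightarrow> (nat \<Rightarrow> nat) set" where
  "tuples S k = PiE S (\<lambda>_. {..<k})"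

definition herm_op :: "nat \<Rightarrow> nat set \<Rightarrow> opr \<Rightarrow> bool" where
  "herm_op m S X \<longleftrightarrow> (\<forall>x\<in>tuples S m. \<forall>y\<in>tuples S m. X y x = cnj (X x y))"

definition norm2sq :: "nat \<Rightarrow> nat set \<Rightarrow> opr \<Rightarrow> real" where
  "norm2sq m S X = (1 / real m ^ card S) *
     (\<Sum>x\<in>tuples S m. \<Sum>y\<in>tuples S m. (cmod (X x y))\<^sup>2)"

definition std_onb :: "nat \<Rightarrow> (nat \<Rightarrow> mat1) \<Rightarrow> bool" where
  "std_onb m B \<longleftrightarrow>
     (\<forall>a<m. \<forall>b<m. B 0 a b = (if a = b then 1 else 0)) \<and>
     (\<forall>i<m^2. \<forall>a<m. \<forall>b<m. B i b a = cnj (B i a b)) \<and>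
     (\<forall>i<m^2. \<forall>j<m^2. (1 / of_nat m) * (\<Sum>a<m. \<Sum>b<m. cnj (B i a b) * B j a b)
                         = (if i = j then 1 else 0))"

definition basis_op :: "(nat \<Rightarrow> mat1) \<Rightarrow> nat set \<Rightarrow> (nat \<Rightarrow> nat) \<Rightarrow> opr" where
  "basis_op B S \<sigma> = (\<lambda>x y. \<Prod>i\<in>S. B (\<sigma> i) (x i) (y i))"

definition fcoeff :: "nat \<Rightarrow> (nat \<Rightarrow> mat1) \<Rightarrow> nat set \<Rightarrow> opr \<Rightarrow> (nat \<Rightarrow> nat) \<Rightarrow> complex" where
  "fcoeff m B S X \<sigma> = (1 / of_nat m ^ card S) *
     (\<Sum>x\<in>tuples S m. \<Sum>y\<in>tuples S m. cnj (basis_op B S \<sigma> x y) * X x y)"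

definition wt :: "nat set \<Rightarrow> (nat \<Rightarrow> nat) \<Rightarrow> nat" where
  "wt S \<sigma> = card {i\<in>S. \<sigma> i \<noteq> 0}"

definition low_part :: "nat \<Rightarrow> (nat \<Rightarrow> mat1) \<Rightarrow> nat set \<Rightarrow> nat \<Rightarrow> opr \<Rightarrow> opr" where
  "low_part m B S d X = (\<lambda>x y. \<Sum>\<sigma>\<in>{\<sigma>\<in>tuples S (m^2). wt S \<sigma> \<le> d}.
       fcoeff m B S X \<sigma> * basis_op B S \<sigma> x y)"

definition high_part :: "nat \<Rightarrow> (nat \<Rightarrow> mat1) \<Rightarrow> nat set \<Rightarrow> nat \<Rightarrow> opr \<Rightarrow> opr" where
  "high_part m B S d X = (\<lambda>x y. \<Sum>\<sigma>\<in>{\<sigma>\<in>tuples S (m^2). wt S \<sigma> > d}.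
       fcoeff m B S X \<sigma> * basis_op B S \<sigma> x y)"

definition influence :: "nat \<Rightarrow> (nat \<Rightarrow> mat1) \<Rightarrow> nat set \<Rightarrow> opr \<Rightarrow> nat \<Rightarrow> real" where
  "influence m B S X i = (\<Sum>\<sigma>\<in>{\<sigma>\<in>tuples S (m^2). \<sigma> i \<noteq> 0}. (cmod (fcoeff m B S X \<sigma>))\<^sup>2)"

text \<open>Tr((P (x) Q) psi^{(x) S}): P acts on the A-registers in S, Q on the B-registers in S.\<close>
definition corr :: "nat \<Rightarrow> nat set \<Rightarrow> opr \<Rightarrow> opr \<Rightarrow> state2 \<Rightarrow> complex" where
  "corr m S P Q \<psi> = (\<Sum>x\<in>tuples S m. \<Sum>x'\<in>tuples S m. \<Sum>y\<in>tuples S m. \<Sum>y'\<in>tuples S m.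
       P x x' * Q y y' * (\<Prod>i\<in>S. \<psi> (x' i, y' i) (x i, y i)))"

definition tr2 :: "nat \<Rightarrow> mat1 \<Rightarrow> mat1 \<Rightarrow> state2 \<Rightarrow> complex" where
  "tr2 m X Y \<psi> = (\<Sum>a<m. \<Sum>a'<m. \<Sum>b<m. \<Sum>b'<m. X a a' * Y b b' * \<psi> (a', b') (a, b))"

definition density2 :: "nat \<Rightarrow> state2 \<Rightarrow> bool" where
  "density2 m \<psi> \<longleftrightarrow>
     (\<forall>p\<in>{..<m}\<times>{..<m}. \<forall>q\<in>{..<m}\<times>{..<m}. \<psi> q p = cnj (\<psi> p q)) \<and>
     (\<forall>v :: nat \<times> nat \<Rightarrow> complex.
        let s = (\<Sum>p\<in>{..<m}\<times>{..<m}. \<Sum>q\<in>{..<m}\<times>{..<m}. cnj (v p) * \<psi> p q * v q)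
        in Im s = 0 \<and> Re s \<ge> 0) \<and>
     (\<Sum>p\<in>{..<m}\<times>{..<m}. \<psi> p p) = 1"

definition max_mixed_marginals :: "nat \<Rightarrow> state2 \<Rightarrow> bool" where
  "max_mixed_marginals m \<psi> \<longleftrightarrow>
     (\<forall>a<m. \<forall>a'<m. (\<Sum>b<m. \<psi> (a, b) (a', b)) = (if a = a' then 1 / of_nat m else 0)) \<and>
     (\<forall>b<m. \<forall>b'<m. (\<Sum>a<m. \<psi> (a, b) (a, b')) = (if b = b' then 1 / of_nat m else 0))"

definition maxcorr :: "nat \<Rightarrow> state2 \<Rightarrow> real" where
  "maxcorr m \<psi> = Sup {cmod (tr2 m (\<lambda>a a'. cnj (P a' a)) Q \<psi>) | P Q.
       (\<Sum>a<m. P a a) = 0 \<and> (\<Sum>a<m. Q a a) = 0 \<and>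
       (1 / real m) * (\<Sum>a<m. \<Sum>b<m. (cmod (P a b))\<^sup>2) = 1 \<and>
       (1 / real m) * (\<Sum>a<m. \<Sum>b<m. (cmod (Q a b))\<^sup>2) = 1}"

definition noisy_mes :: "nat \<Rightarrow> state2 \<Rightarrow> bool" where
  "noisy_mes m \<psi> \<longleftrightarrow> density2 m \<psi> \<and> max_mixed_marginals m \<psi> \<and> maxcorr m \<psi> < 1"

definition part_op :: "nat \<Rightarrow> (nat \<Rightarrow> mat1) \<Rightarrow> nat \<Rightarrow> nat set \<Rightarrow> opr \<Rightarrow> (nat \<Rightarrow> nat) \<Rightarrow> opr" where
  "part_op m B n H X \<sigma> = (\<lambda>x y. \<Sum>\<tau>\<in>{\<tau>\<in>tuples {..<n} (m^2). restrict \<tau> H = \<sigma>}.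
       fcoeff m B {..<n} X \<tau> * basis_op B ({..<n} - H) (restrict \<tau> ({..<n} - H)) x y)"

end

theory Submission
  imports Defs "Jordan_Normal_Form.Determinant"
begin

lemma sum_sq_idx:
  fixes f :: "nat \<Rightarrow> nat \<Rightarrow> 'a::comm_monoid_add"
  shows "(\<Sum>p<m^2. f (p div m) (p mod m)) = (\<Sum>a<m. \<Sum>b<m. f a b)"
proof -
  have "(\<Sum>p<m^2. f (p div m) (p mod m)) = (\<Sum>p<m*m. f (p div m) (p mod m))"
    by (simp add: power2_eq_square)
  also have "\<dots> = (\<Sum>a<m. \<Sum>b<m. f ((b + a*m) div m) ((b + a*m) mod m))"
    by (rule sum_mult_product)
  also have "\<dots> = (\<Sum>a<m. \<Sum>b<m. f a b)"
    by (intro sum.cong refl) auto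
  finally show ?thesis .
qed

lemma onb_complete:
  assumes onb: "std_onb m B" and ab: "a<m" "b<m" "a'<m" "b'<m"
  shows "(\<Sum>k<m^2. cnj (B k a b) * B k a' b') = (if a=a' \<and> b=b' then of_nat m else 0)"
proof -
  have m0: "m > 0" using ab by auto
  define U :: "complex mat" where "U = mat (m^2) (m^2) (\<lambda>(k,p). B k (p div m) (p mod m))"
  define V :: "complex mat" where "V = mat (m^2) (m^2) (\<lambda>(p,k). cnj (B k (p div m) (p mod m)) / of_nat m)"
  have orth: "\<And>i j. i<m^2 \<Longrightarrow> j<m^2 \<Longrightarrow> (1 / of_nat m) * (\<Sum>a<m. \<Sum>b<m. cnj (B i a b) * B j a b) = (if i = j then 1 else 0)"
    using onb unfolding std_onb_def by blast
  have UV: "U * V = 1\<^sub>m (m^2)"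
  proof (rule eq_matI)
    fix k l assume kl: "k < dim_row (1\<^sub>m (m^2))" "l < dim_col (1\<^sub>m (m^2))"
    hence kl': "k < m^2" "l < m^2" by auto
    have "(U * V) $$ (k,l) = (\<Sum>p<m^2. B k (p div m) (p mod m) * (cnj (B l (p div m) (p mod m)) / of_nat m))"
      using kl' by (simp add: U_def V_def scalar_prod_def atLeast0LessThan)
    also have "\<dots> = (\<Sum>a<m. \<Sum>b<m. B k a b * (cnj (B l a b) / of_nat m))"
      by (rule sum_sq_idx)
    also have "\<dots> = (1 / of_nat m) * (\<Sum>a<m. \<Sum>b<m. cnj (B l a b) * B k a b)"
      by (simp add: sum_distrib_left mult_ac)
    also have "\<dots> = (if l = k then 1 else 0)" using orth kl' by blast
    finally show "(U * V) $$ (k,l) = 1\<^sub>m (m^2) $$ (k,l)" using kl' by auto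
  qed (auto simp: U_def V_def)
  have VU: "V * U = 1\<^sub>m (m^2)"
    by (rule mat_mult_left_right_inverse[OF _ _ UV]) (auto simp: U_def V_def)
  define p where "p = b + a*m"
  define q where "q = b' + a'*m"
  have lt: "\<And>x y. x < m \<Longrightarrow> y < m \<Longrightarrow> y + x*m < m^2"
  proof -
    fix x y :: nat assume xy: "x < m" "y < m"
    have "(x+1)*m \<le> m*m" using xy by (intro mult_le_mono1) simp
    thus "y + x*m < m^2" using xy by (simp add: power2_eq_square)
  qed
  have pq: "p < m^2" "q < m^2" "p div m = a" "p mod m = b" "q div m = a'" "q mod m = b'"
    using ab lt unfolding p_def q_def by auto
  have "(V * U) $$ (p,q) = (\<Sum>k<m^2. cnj (B k a b) / of_nat m * B k a' b')"
    using pq by (simp add: U_def V_def scalar_prod_def atLeast0LessThan)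
  moreover have "(V * U) $$ (p,q) = (if p = q then 1 else 0)" using VU pq by simp
  moreover have "p = q \<longleftrightarrow> a=a' \<and> b=b'" using pq unfolding p_def q_def by (metis)
  ultimately have "(\<Sum>k<m^2. cnj (B k a b) / of_nat m * B k a' b') = (if a=a' \<and> b=b' then 1 else 0)" by simp
  hence "of_nat m * (\<Sum>k<m^2. cnj (B k a b) / of_nat m * B k a' b') = (if a=a' \<and> b=b' then of_nat m else 0)" by simp
  moreover have "of_nat m * (\<Sum>k<m^2. cnj (B k a b) / of_nat m * B k a' b') = (\<Sum>k<m^2. cnj (B k a b) * B k a' b')"
    using m0 by (simp add: sum_distrib_left)
  ultimately show ?thesis by simp
qed
lemma ps:
  fixes f :: "nat \<Rightarrow> nat \<Rightarrow> 'c::comm_semiring_1"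
  assumes "finite S"
  shows "(\<Prod>i\<in>S. \<Sum>a<k. f i a) = (\<Sum>x\<in>tuples S k. \<Prod>i\<in>S. f i (x i))"
  unfolding tuples_def using assms by (intro prod_sum_PiE) auto

lemma finite_tuples[simp]: "finite S \<Longrightarrow> finite (tuples S k)"
  by (simp add: tuples_def finite_PiE)

lemma tuples_neq: "x \<in> tuples S k \<Longrightarrow> y \<in> tuples S k \<Longrightarrow> x \<noteq> y \<Longrightarrow> \<exists>i\<in>S. x i \<noteq> y i"
  unfolding tuples_def by (meson PiE_ext)

lemma tuples_mem: "x \<in> tuples S k \<Longrightarrow> i \<in> S \<Longrightarrow> x i < k"
  unfolding tuples_def by auto

lemma corr_factor:
  assumes "finite S"
  shows "corr m S (basis_op A S \<alpha>) (basis_op B S \<beta>) \<psi> = (\<Prod>i\<in>S. tr2 m (A (\<alpha> i)) (B (\<beta> i)) \<psi>)"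
proof -
  have "(\<Prod>i\<in>S. tr2 m (A (\<alpha> i)) (B (\<beta> i)) \<psi>) =
     (\<Sum>x\<in>tuples S m. \<Prod>i\<in>S. \<Sum>a'<m. \<Sum>b<m. \<Sum>b'<m. A (\<alpha> i) (x i) a' * B (\<beta> i) b b' * \<psi> (a', b') (x i, b))"
    unfolding tr2_def by (rule ps[OF assms])
  also have "\<dots> = (\<Sum>x\<in>tuples S m. \<Sum>x'\<in>tuples S m. \<Prod>i\<in>S. \<Sum>b<m. \<Sum>b'<m. A (\<alpha> i) (x i) (x' i) * B (\<beta> i) b b' * \<psi> (x' i, b') (x i, b))"
    by (intro sum.cong refl ps[OF assms])
  also have "\<dots> = (\<Sum>x\<in>tuples S m. \<Sum>x'\<in>tuples S m. \<Sum>y\<in>tuples S m. \<Prod>i\<in>S. \<Sum>b'<m. A (\<alpha> i) (x i) (x' i) * B (\<beta> i) (y i) b' * \<psi> (x' i, b') (x i, y i))"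
    by (intro sum.cong refl ps[OF assms])
  also have "\<dots> = (\<Sum>x\<in>tuples S m. \<Sum>x'\<in>tuples S m. \<Sum>y\<in>tuples S m. \<Sum>y'\<in>tuples S m. \<Prod>i\<in>S. A (\<alpha> i) (x i) (x' i) * B (\<beta> i) (y i) (y' i) * \<psi> (x' i, y' i) (x i, y i))"
    by (intro sum.cong refl ps[OF assms])
  also have "\<dots> = corr m S (basis_op A S \<alpha>) (basis_op B S \<beta>) \<psi>"
    unfolding corr_def basis_op_def by (simp add: prod.distrib)
  finally show ?thesis by simp
qed

lemma corr_cong:
  assumes "\<And>x y. x \<in> tuples S m \<Longrightarrow> y \<in> tuples S m \<Longrightarrow> P x y = P' x y"
      and "\<And>x y. x \<in> tuples S m \<Longrightarrow> y \<in> tuples S m \<Longrightarrow> Q x y = Q' x y"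
  shows "corr m S P Q \<psi> = corr m S P' Q' \<psi>"
  unfolding corr_def using assms by (intro sum.cong refl) auto

lemma corr_lin_left:
  assumes "finite J"
  shows "corr m S (\<lambda>x y. \<Sum>j\<in>J. f j * X j x y) Q \<psi> = (\<Sum>j\<in>J. f j * corr m S (X j) Q \<psi>)"
  unfolding corr_def
  by (simp add: sum_distrib_left sum_distrib_right mult_ac sum.swap[where A=J])

lemma corr_lin_right:
  assumes "finite J"
  shows "corr m S P (\<lambda>x y. \<Sum>j\<in>J. f j * X j x y) \<psi> = (\<Sum>j\<in>J. f j * corr m S P (X j) \<psi>)"
  unfolding corr_def
  by (simp add: sum_distrib_left sum_distrib_right mult_ac sum.swap[where A=J])


lemma basis_complete:
  assumes S: "finite S" and onb: "std_onb m B"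
    and xy: "x \<in> tuples S m" "y \<in> tuples S m" "x' \<in> tuples S m" "y' \<in> tuples S m"
  shows "(\<Sum>\<sigma>\<in>tuples S (m^2). cnj (basis_op B S \<sigma> x y) * basis_op B S \<sigma> x' y')
         = (if x = x' \<and> y = y' then of_nat m ^ card S else 0)"
proof -
  have "(\<Sum>\<sigma>\<in>tuples S (m^2). cnj (basis_op B S \<sigma> x y) * basis_op B S \<sigma> x' y')
      = (\<Sum>\<sigma>\<in>tuples S (m^2). \<Prod>i\<in>S. cnj (B (\<sigma> i) (x i) (y i)) * B (\<sigma> i) (x' i) (y' i))"
    unfolding basis_op_def by (simp add: prod.distrib)
  also have "\<dots> = (\<Prod>i\<in>S. \<Sum>k<m^2. cnj (B k (x i) (y i)) * B k (x' i) (y' i))"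
    by (rule ps[OF S, symmetric])
  also have "\<dots> = (\<Prod>i\<in>S. (if x i = x' i \<and> y i = y' i then of_nat m else 0))"
    using onb_complete[OF onb] tuples_mem[OF xy(1)] tuples_mem[OF xy(2)] tuples_mem[OF xy(3)] tuples_mem[OF xy(4)]
    by (intro prod.cong refl) auto
  also have "\<dots> = (if x = x' \<and> y = y' then of_nat m ^ card S else 0)"
  proof (cases "x = x' \<and> y = y'")
    case True thus ?thesis by simp
  next
    case False
    then obtain i where "i \<in> S" "x i \<noteq> x' i \<or> y i \<noteq> y' i"
      using tuples_neq xy by blast
    thus ?thesis using False S by (auto intro!: prod_zero)
  qed
  finally show ?thesis .
qed

lemma basis_orth:
  assumes S: "finite S" and onb: "std_onb m B"
    and st: "\<sigma> \<in> tuples S (m^2)" "\<tau> \<in> tuples S (m^2)"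
  shows "fcoeff m B S (basis_op B S \<tau>) \<sigma> = (if \<sigma> = \<tau> then 1 else 0)"
proof -
  have orth: "\<And>i j. i<m^2 \<Longrightarrow> j<m^2 \<Longrightarrow> (1 / of_nat m) * (\<Sum>a<m. \<Sum>b<m. cnj (B i a b) * B j a b) = (if i = j then 1 else 0)"
    using onb unfolding std_onb_def by blast
  have "(\<Sum>x\<in>tuples S m. \<Sum>y\<in>tuples S m. cnj (basis_op B S \<sigma> x y) * basis_op B S \<tau> x y)
     = (\<Sum>x\<in>tuples S m. \<Sum>y\<in>tuples S m. \<Prod>i\<in>S. cnj (B (\<sigma> i) (x i) (y i)) * B (\<tau> i) (x i) (y i))"
    unfolding basis_op_def by (simp add: prod.distrib)
  also have "\<dots> = (\<Sum>x\<in>tuples S m. \<Prod>i\<in>S. \<Sum>b<m. cnj (B (\<sigma> i) (x i) b) * B (\<tau> i) (x i) b)"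
    by (intro sum.cong refl ps[OF S, symmetric])
  also have "\<dots> = (\<Prod>i\<in>S. \<Sum>a<m. \<Sum>b<m. cnj (B (\<sigma> i) a b) * B (\<tau> i) a b)"
    by (rule ps[OF S, symmetric])
  finally have e: "(\<Sum>x\<in>tuples S m. \<Sum>y\<in>tuples S m. cnj (basis_op B S \<sigma> x y) * basis_op B S \<tau> x y)
     = (\<Prod>i\<in>S. \<Sum>a<m. \<Sum>b<m. cnj (B (\<sigma> i) a b) * B (\<tau> i) a b)" .
  have "fcoeff m B S (basis_op B S \<tau>) \<sigma> = (\<Prod>i\<in>S. (1 / of_nat m) * (\<Sum>a<m. \<Sum>b<m. cnj (B (\<sigma> i) a b) * B (\<tau> i) a b))"
    unfolding fcoeff_def e by (simp add: prod_dividef)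
  also have "\<dots> = (\<Prod>i\<in>S. (if \<sigma> i = \<tau> i then 1 else 0))"
    using orth tuples_mem[OF st(1)] tuples_mem[OF st(2)] by (intro prod.cong refl) auto
  also have "\<dots> = (if \<sigma> = \<tau> then 1 else 0)"
  proof (cases "\<sigma> = \<tau>")
    case True thus ?thesis by simp
  next
    case False
    then obtain i where "i \<in> S" "\<sigma> i \<noteq> \<tau> i" using tuples_neq st by blast
    thus ?thesis using False S by (auto intro!: prod_zero)
  qed
  finally show ?thesis .
qed

lemma expansion:
  assumes S: "finite S" and onb: "std_onb m B" and m: "m > 0"
    and xy: "x' \<in> tuples S m" "y' \<in> tuples S m"
  shows "(\<Sum>\<sigma>\<in>tuples S (m^2). fcoeff m B S X \<sigma> * basis_op B S \<sigma> x' y') = X x' y'"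
proof -
  have "(\<Sum>\<sigma>\<in>tuples S (m^2). fcoeff m B S X \<sigma> * basis_op B S \<sigma> x' y')
     = (1 / of_nat m ^ card S) * (\<Sum>x\<in>tuples S m. \<Sum>y\<in>tuples S m. X x y *
          (\<Sum>\<sigma>\<in>tuples S (m^2). cnj (basis_op B S \<sigma> x y) * basis_op B S \<sigma> x' y'))"
    unfolding fcoeff_def
    by (simp add: sum_distrib_left sum_distrib_right mult_ac sum.swap[where A="tuples S (m^2)"])
  also have "\<dots> = (1 / of_nat m ^ card S) * (\<Sum>x\<in>tuples S m. \<Sum>y\<in>tuples S m. X x y *
          (if x = x' \<and> y = y' then of_nat m ^ card S else 0))"
    using basis_complete[OF S onb _ _ xy] by (intro arg_cong2[where f="(*)"] sum.cong refl) auto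
  also have "\<dots> = (1 / of_nat m ^ card S) * (X x' y' * of_nat m ^ card S)"
  proof -
    have "(\<Sum>x\<in>tuples S m. \<Sum>y\<in>tuples S m. X x y * (if x = x' \<and> y = y' then of_nat m ^ card S else 0))
       = (\<Sum>x\<in>tuples S m. if x = x' then X x' y' * of_nat m ^ card S else 0)"
    proof (intro sum.cong refl)
      fix x assume "x \<in> tuples S m"
      show "(\<Sum>y\<in>tuples S m. X x y * (if x = x' \<and> y = y' then of_nat m ^ card S else 0))
           = (if x = x' then X x' y' * of_nat m ^ card S else 0)"
        using xy S by (cases "x = x'") (simp_all add: if_distrib sum.delta cong: if_cong)
    qed
    also have "\<dots> = X x' y' * of_nat m ^ card S" using xy S by (simp add: sum.delta)
    finally show ?thesis by simp
  qed
  also have "\<dots> = X x' y'" using m by simp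
  finally show ?thesis .
qed

lemma fcoeff_lin:
  assumes "finite J"
  shows "fcoeff m B S (\<lambda>x y. \<Sum>j\<in>J. f j * X j x y) \<sigma> = (\<Sum>j\<in>J. f j * fcoeff m B S (X j) \<sigma>)"
  unfolding fcoeff_def
  by (simp add: sum_distrib_left sum_distrib_right mult_ac sum.swap[where A=J])


lemma parseval:
  assumes S: "finite S" and onb: "std_onb m B" and m: "m > 0"
  shows "(\<Sum>\<sigma>\<in>tuples S (m^2). (cmod (fcoeff m B S X \<sigma>))\<^sup>2) = norm2sq m S X"
proof -
  define M :: complex where "M = of_nat m ^ card S"
  have cj: "cnj (fcoeff m B S X \<sigma>) = (1 / M) * (\<Sum>x\<in>tuples S m. \<Sum>y\<in>tuples S m. cnj (X x y) * basis_op B S \<sigma> x y)" for \<sigma>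
    unfolding fcoeff_def M_def by (simp add: mult_ac)
  have "complex_of_real (\<Sum>\<sigma>\<in>tuples S (m^2). (cmod (fcoeff m B S X \<sigma>))\<^sup>2)
      = (\<Sum>\<sigma>\<in>tuples S (m^2). fcoeff m B S X \<sigma> * cnj (fcoeff m B S X \<sigma>))"
    unfolding of_real_sum by (intro sum.cong refl) (rule complex_norm_square)
  also have "\<dots> = (1 / M) * (\<Sum>x\<in>tuples S m. \<Sum>y\<in>tuples S m. cnj (X x y) *
        (\<Sum>\<sigma>\<in>tuples S (m^2). fcoeff m B S X \<sigma> * basis_op B S \<sigma> x y))"
    unfolding cj
    by (simp add: sum_distrib_left sum_distrib_right mult_ac sum.swap[where A="tuples S (m^2)"])
  also have "\<dots> = (1 / M) * (\<Sum>x\<in>tuples S m. \<Sum>y\<in>tuples S m. cnj (X x y) * X x y)"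
    using expansion[OF S onb m] by (intro arg_cong2[where f="(*)"] sum.cong refl) auto
  also have "\<dots> = (1 / M) * (\<Sum>x\<in>tuples S m. \<Sum>y\<in>tuples S m. complex_of_real ((cmod (X x y))\<^sup>2))"
    by (simp only: complex_norm_square mult.commute)
  also have "\<dots> = complex_of_real (norm2sq m S X)"
    unfolding norm2sq_def M_def of_real_mult of_real_sum by simp
  finally show ?thesis using of_real_eq_iff by blast
qed

lemma fcoeff_low:
  assumes S: "finite S" and onb: "std_onb m B" and st: "\<sigma> \<in> tuples S (m^2)"
  shows "fcoeff m B S (low_part m B S d X) \<sigma> = (if wt S \<sigma> \<le> d then fcoeff m B S X \<sigma> else 0)"
proof -
  let ?L = "{\<sigma>\<in>tuples S (m^2). wt S \<sigma> \<le> d}"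
  have "fcoeff m B S (low_part m B S d X) \<sigma> = (\<Sum>\<tau>\<in>?L. fcoeff m B S X \<tau> * fcoeff m B S (basis_op B S \<tau>) \<sigma>)"
    unfolding low_part_def using S by (intro fcoeff_lin) auto
  also have "\<dots> = (\<Sum>\<tau>\<in>?L. if \<sigma> = \<tau> then fcoeff m B S X \<tau> else 0)"
    using basis_orth[OF S onb st] by (intro sum.cong refl) auto
  also have "\<dots> = (if wt S \<sigma> \<le> d then fcoeff m B S X \<sigma> else 0)"
    using S st by (simp add: sum.delta)
  finally show ?thesis .
qed

lemma infl_sum:
  assumes S: "finite S"
  shows "(\<Sum>i\<in>S. influence m B S Y i) = (\<Sum>\<sigma>\<in>tuples S (m^2). real (wt S \<sigma>) * (cmod (fcoeff m B S Y \<sigma>))\<^sup>2)"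
proof -
  have "(\<Sum>i\<in>S. influence m B S Y i) = (\<Sum>i\<in>S. \<Sum>\<sigma>\<in>tuples S (m^2). if \<sigma> i \<noteq> 0 then (cmod (fcoeff m B S Y \<sigma>))\<^sup>2 else 0)"
    unfolding influence_def using S by (simp add: sum.inter_filter)
  also have "\<dots> = (\<Sum>\<sigma>\<in>tuples S (m^2). \<Sum>i\<in>S. if \<sigma> i \<noteq> 0 then (cmod (fcoeff m B S Y \<sigma>))\<^sup>2 else 0)"
    by (rule sum.swap)
  also have "\<dots> = (\<Sum>\<sigma>\<in>tuples S (m^2). real (wt S \<sigma>) * (cmod (fcoeff m B S Y \<sigma>))\<^sup>2)"
  proof (intro sum.cong refl)
    fix \<sigma>
    have "(\<Sum>i\<in>S. if \<sigma> i \<noteq> 0 then (cmod (fcoeff m B S Y \<sigma>))\<^sup>2 else 0) = (\<Sum>i\<in>{i\<in>S. \<sigma> i \<noteq> 0}. (cmod (fcoeff m B S Y \<sigma>))\<^sup>2)"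
      by (rule sum.inter_filter[OF S, symmetric])
    thus "(\<Sum>i\<in>S. if \<sigma> i \<noteq> 0 then (cmod (fcoeff m B S Y \<sigma>))\<^sup>2 else 0) = real (wt S \<sigma>) * (cmod (fcoeff m B S Y \<sigma>))\<^sup>2"
      unfolding wt_def by simp
  qed
  finally show ?thesis .
qed

lemma infl_low_total:
  assumes S: "finite S" and onb: "std_onb m B" and m: "m > 0" and n1: "norm2sq m S X \<le> 1"
  shows "(\<Sum>i\<in>S. influence m B S (low_part m B S d X) i) \<le> real d"
proof -
  have "(\<Sum>i\<in>S. influence m B S (low_part m B S d X) i)
     = (\<Sum>\<sigma>\<in>tuples S (m^2). real (wt S \<sigma>) * (cmod (if wt S \<sigma> \<le> d then fcoeff m B S X \<sigma> else 0))\<^sup>2)"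
    unfolding infl_sum[OF S] using fcoeff_low[OF S onb] by (intro sum.cong refl) auto
  also have "\<dots> \<le> (\<Sum>\<sigma>\<in>tuples S (m^2). real d * (cmod (fcoeff m B S X \<sigma>))\<^sup>2)"
    by (intro sum_mono) (auto intro: mult_right_mono)
  also have "\<dots> = real d * norm2sq m S X"
    by (simp add: sum_distrib_left[symmetric] parseval[OF S onb m])
  also have "\<dots> \<le> real d" using n1 by (simp add: mult_left_le)
  finally show ?thesis .
qed

lemma count_bad:
  fixes g :: "nat \<Rightarrow> real"
  assumes S: "finite S" and g: "\<And>i. 0 \<le> g i" and tot: "(\<Sum>i\<in>S. g i) \<le> D" and e: "0 \<le> \<epsilon>"
  shows "\<epsilon> * real (card {i\<in>S. g i > \<epsilon>}) \<le> D"
proof -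
  have "\<epsilon> * real (card {i\<in>S. g i > \<epsilon>}) = (\<Sum>i\<in>{i\<in>S. g i > \<epsilon>}. \<epsilon>)" by simp
  also have "\<dots> \<le> (\<Sum>i\<in>{i\<in>S. g i > \<epsilon>}. g i)" by (intro sum_mono) auto
  also have "\<dots> \<le> (\<Sum>i\<in>S. g i)" using S g by (intro sum_mono2) auto
  finally show ?thesis using tot by simp
qed


lemma corr_diag:
  assumes S: "finite S" and J: "finite J"
    and diag: "\<forall>i<m^2. \<forall>j<m^2. tr2 m (A i) (B j) \<psi> = (if i = j then complex_of_real (c i) else 0)"
    and phi: "\<And>j. j \<in> J \<Longrightarrow> \<phi> j \<in> tuples S (m^2)" and inj: "inj_on \<phi> J"
  shows "corr m S (\<lambda>x y. \<Sum>j\<in>J. f j * basis_op A S (\<phi> j) x y) (\<lambda>x y. \<Sum>k\<in>J. g k * basis_op B S (\<phi> k) x y) \<psi>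
       = (\<Sum>j\<in>J. f j * g j * complex_of_real (\<Prod>i\<in>S. c (\<phi> j i)))"
proof -
  have pr: "(\<Prod>i\<in>S. tr2 m (A (\<phi> j i)) (B (\<phi> k i)) \<psi>) = (if j = k then complex_of_real (\<Prod>i\<in>S. c (\<phi> j i)) else 0)"
    if jk: "j \<in> J" "k \<in> J" for j k
  proof (cases "j = k")
    case True
    have "(\<Prod>i\<in>S. tr2 m (A (\<phi> j i)) (B (\<phi> k i)) \<psi>) = (\<Prod>i\<in>S. complex_of_real (c (\<phi> j i)))"
      using True diag tuples_mem[OF phi[OF jk(1)]] by (intro prod.cong refl) auto
    thus ?thesis using True by simp
  next
    case False
    hence "\<phi> j \<noteq> \<phi> k" using inj jk by (meson inj_on_def)
    then obtain i where i: "i \<in> S" "\<phi> j i \<noteq> \<phi> k i" using tuples_neq phi jk by blast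
    have "tr2 m (A (\<phi> j i)) (B (\<phi> k i)) \<psi> = 0"
      using diag i tuples_mem[OF phi[OF jk(1)] i(1)] tuples_mem[OF phi[OF jk(2)] i(1)] by auto
    thus ?thesis using False S i by (auto intro!: prod_zero)
  qed
  have "corr m S (\<lambda>x y. \<Sum>j\<in>J. f j * basis_op A S (\<phi> j) x y) (\<lambda>x y. \<Sum>k\<in>J. g k * basis_op B S (\<phi> k) x y) \<psi>
      = (\<Sum>j\<in>J. f j * (\<Sum>k\<in>J. g k * (\<Prod>i\<in>S. tr2 m (A (\<phi> j i)) (B (\<phi> k i)) \<psi>)))"
    by (simp add: corr_lin_left[OF J] corr_lin_right[OF J] corr_factor[OF S])
  also have "\<dots> = (\<Sum>j\<in>J. f j * (\<Sum>k\<in>J. g k * (if j = k then complex_of_real (\<Prod>i\<in>S. c (\<phi> j i)) else 0)))"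
    using pr by (intro sum.cong refl arg_cong2[where f="(*)"]) auto
  also have "\<dots> = (\<Sum>j\<in>J. f j * g j * complex_of_real (\<Prod>i\<in>S. c (\<phi> j i)))"
    using J by (intro sum.cong refl) (simp add: if_distrib sum.delta cong: if_cong)
  finally show ?thesis .
qed

lemma restrict_tuples: "\<tau> \<in> tuples N k \<Longrightarrow> H \<subseteq> N \<Longrightarrow> restrict \<tau> H \<in> tuples H k"
  by (auto simp: tuples_def)

lemma corr_identity:
  assumes H: "H \<subseteq> {..<n}" and onb: "std_onb m A" "std_onb m B" and m: "m > 0"
    and diag: "\<forall>i<m^2. \<forall>j<m^2. tr2 m (A i) (B j) \<psi> = (if i = j then complex_of_real (c i) else 0)"
  shows "corr m {..<n} P Q \<psi> =
      (\<Sum>\<sigma>\<in>tuples H (m^2). complex_of_real (\<Prod>i\<in>H. c (\<sigma> i)) *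
          corr m ({..<n} - H) (part_op m A n H P \<sigma>) (part_op m B n H Q \<sigma>) \<psi>)"
proof -
  let ?N = "{..<n}" and ?Hc = "{..<n} - H"
  let ?T = "tuples ?N (m^2)"
  let ?F = "\<lambda>\<tau>. fcoeff m A ?N P \<tau> * fcoeff m B ?N Q \<tau> * complex_of_real (\<Prod>i\<in>?N. c (\<tau> i))"
  have fH: "finite H" using H finite_subset by blast
  have "corr m ?N P Q \<psi> = corr m ?N (\<lambda>x y. \<Sum>\<tau>\<in>?T. fcoeff m A ?N P \<tau> * basis_op A ?N (id \<tau>) x y)
        (\<lambda>x y. \<Sum>\<tau>\<in>?T. fcoeff m B ?N Q \<tau> * basis_op B ?N (id \<tau>) x y) \<psi>"
    using expansion[OF _ onb(1) m] expansion[OF _ onb(2) m] by (intro corr_cong) auto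
  also have "\<dots> = (\<Sum>\<tau>\<in>?T. ?F \<tau>)"
    using corr_diag[OF _ _ diag, where S="?N" and J="?T" and \<phi>=id and f="fcoeff m A ?N P" and g="fcoeff m B ?N Q"] by simp
  finally have L: "corr m ?N P Q \<psi> = (\<Sum>\<tau>\<in>?T. ?F \<tau>)" .
  have R: "complex_of_real (\<Prod>i\<in>H. c (\<sigma> i)) *
          corr m ?Hc (part_op m A n H P \<sigma>) (part_op m B n H Q \<sigma>) \<psi>
        = (\<Sum>\<tau>\<in>{\<tau>\<in>?T. restrict \<tau> H = \<sigma>}. ?F \<tau>)"
    if \<sigma>: "\<sigma> \<in> tuples H (m^2)" for \<sigma>
  proof -
    let ?J = "{\<tau>\<in>?T. restrict \<tau> H = \<sigma>}"
    have inj: "inj_on (\<lambda>\<tau>. restrict \<tau> ?Hc) ?J"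
    proof (rule inj_onI)
      fix \<tau> \<tau>' assume a: "\<tau> \<in> ?J" "\<tau>' \<in> ?J" "restrict \<tau> ?Hc = restrict \<tau>' ?Hc"
      show "\<tau> = \<tau>'"
      proof (rule ext)
        fix i
        show "\<tau> i = \<tau>' i"
        proof (cases "i \<in> H")
          case True
          then show ?thesis using a(1,2) by (metis (mono_tags, lifting) mem_Collect_eq restrict_apply')
        next
          case False
          show ?thesis
          proof (cases "i < n")
            case True
            then show ?thesis using a(3) False by (metis Diff_iff lessThan_iff restrict_apply')
          next
            case False
            then show ?thesis using a(1,2) by (auto simp: tuples_def PiE_def extensional_def)
          qed
        qed
      qed
    qed
    have "corr m ?Hc (part_op m A n H P \<sigma>) (part_op m B n H Q \<sigma>) \<psi>
        = (\<Sum>\<tau>\<in>?J. fcoeff m A ?N P \<tau> * fcoeff m B ?N Q \<tau> * complex_of_real (\<Prod>i\<in>?Hc. c (restrict \<tau> ?Hc i)))"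
      unfolding part_op_def
      by (rule corr_diag[OF _ _ diag _ inj]) (auto intro: restrict_tuples)
    also have "\<dots> = (\<Sum>\<tau>\<in>?J. fcoeff m A ?N P \<tau> * fcoeff m B ?N Q \<tau> * complex_of_real (\<Prod>i\<in>?Hc. c (\<tau> i)))"
      by (intro sum.cong refl arg_cong2[where f="(*)"] arg_cong[where f=complex_of_real] prod.cong) auto
    finally have e: "corr m ?Hc (part_op m A n H P \<sigma>) (part_op m B n H Q \<sigma>) \<psi> = \<dots>" .
    have "complex_of_real (\<Prod>i\<in>H. c (\<sigma> i)) * corr m ?Hc (part_op m A n H P \<sigma>) (part_op m B n H Q \<sigma>) \<psi>
       = (\<Sum>\<tau>\<in>?J. fcoeff m A ?N P \<tau> * fcoeff m B ?N Q \<tau> * complex_of_real ((\<Prod>i\<in>H. c (\<tau> i)) * (\<Prod>i\<in>?Hc. c (\<tau> i))))"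
      unfolding e sum_distrib_left
    proof (intro sum.cong refl)
      fix \<tau> assume "\<tau> \<in> ?J"
      hence "(\<Prod>i\<in>H. c (\<sigma> i)) = (\<Prod>i\<in>H. c (\<tau> i))" by (auto intro!: prod.cong)
      thus "complex_of_real (\<Prod>i\<in>H. c (\<sigma> i)) * (fcoeff m A ?N P \<tau> * fcoeff m B ?N Q \<tau> * complex_of_real (\<Prod>i\<in>?Hc. c (\<tau> i)))
          = fcoeff m A ?N P \<tau> * fcoeff m B ?N Q \<tau> * complex_of_real ((\<Prod>i\<in>H. c (\<tau> i)) * (\<Prod>i\<in>?Hc. c (\<tau> i)))"
        by (simp add: mult_ac)
    qed
    also have "\<dots> = (\<Sum>\<tau>\<in>?J. ?F \<tau>)"
    proof -
      have "\<And>\<tau>. (\<Prod>i\<in>H. c (\<tau> i)) * (\<Prod>i\<in>?Hc. c (\<tau> i)) = (\<Prod>i\<in>?N. c (\<tau> i))"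
        using H fH by (subst prod.union_disjoint[symmetric]) (auto intro!: prod.cong)
      thus ?thesis by simp
    qed
    finally show ?thesis .
  qed
  have "(\<Sum>\<sigma>\<in>tuples H (m^2). complex_of_real (\<Prod>i\<in>H. c (\<sigma> i)) *
          corr m ?Hc (part_op m A n H P \<sigma>) (part_op m B n H Q \<sigma>) \<psi>)
      = (\<Sum>\<sigma>\<in>tuples H (m^2). \<Sum>\<tau>\<in>{\<tau>\<in>?T. restrict \<tau> H = \<sigma>}. ?F \<tau>)"
    using R by (intro sum.cong refl) auto
  also have "\<dots> = (\<Sum>\<tau>\<in>?T. ?F \<tau>)"
    using fH H by (intro sum.group) (auto intro: restrict_tuples)
  finally show ?thesis using L by simp
qed


lemma infl_nonneg: "0 \<le> influence m B S X i"
  unfolding influence_def by (intro sum_nonneg) auto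

theorem lemma7p4:
  fixes m n d :: nat and \<delta> \<epsilon> :: real and \<psi> :: state2 and P Q :: opr
    and A B :: "nat \<Rightarrow> mat1" and c :: "nat \<Rightarrow> real"
  assumes "0 \<le> \<delta>" "\<delta> < 1" "0 \<le> \<epsilon>" "\<epsilon> < 1" "n > 0" "m > 1"
    and "noisy_mes m \<psi>"
    and "herm_op m {..<n} P" "herm_op m {..<n} Q"
    and "norm2sq m {..<n} P \<le> 1" "norm2sq m {..<n} Q \<le> 1"
    and "norm2sq m {..<n} (high_part m A {..<n} d P) \<le> \<delta>"
    and "norm2sq m {..<n} (high_part m B {..<n} d Q) \<le> \<delta>"
    and "std_onb m A" "std_onb m B"
    and "\<forall>i<m^2. \<forall>j<m^2. tr2 m (A i) (B j) \<psi> = (if i = j then complex_of_real (c i) else 0)"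
    and "\<forall>i j. i \<le> j \<longrightarrow> j < m^2 \<longrightarrow> c j \<le> c i"
    and "\<forall>i<m^2. 0 \<le> c i"
  shows "\<exists>H \<subseteq> {..<n}. \<epsilon> * real (card H) \<le> 2 * real d \<and>
    (\<forall>i\<in>{..<n} - H. influence m A {..<n} (low_part m A {..<n} d P) i \<le> \<epsilon> \<and>
                     influence m B {..<n} (low_part m B {..<n} d Q) i \<le> \<epsilon>) \<and>
    corr m {..<n} P Q \<psi> =
      (\<Sum>\<sigma>\<in>tuples H (m^2). complex_of_real (\<Prod>i\<in>H. c (\<sigma> i)) *
          corr m ({..<n} - H) (part_op m A n H P \<sigma>) (part_op m B n H Q \<sigma>) \<psi>)"
proof -
  have m: "m > 0" using assms(6) by simp
  define gP where "gP = influence m A {..<n} (low_part m A {..<n} d P)"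
  define gQ where "gQ = influence m B {..<n} (low_part m B {..<n} d Q)"
  define BP where "BP = {i\<in>{..<n}. gP i > \<epsilon>}"
  define BQ where "BQ = {i\<in>{..<n}. gQ i > \<epsilon>}"
  define H where "H = BP \<union> BQ"
  have HN: "H \<subseteq> {..<n}" unfolding H_def BP_def BQ_def by auto
  have cP: "\<epsilon> * real (card BP) \<le> real d" unfolding BP_def
    by (rule count_bad) (auto simp: gP_def infl_nonneg infl_low_total[OF _ assms(14) m assms(10)] assms(3))
  have cQ: "\<epsilon> * real (card BQ) \<le> real d" unfolding BQ_def
    by (rule count_bad) (auto simp: gQ_def infl_nonneg infl_low_total[OF _ assms(15) m assms(11)] assms(3))
  have "card H \<le> card BP + card BQ" unfolding H_def by (rule card_Un_le)
  hence "\<epsilon> * real (card H) \<le> \<epsilon> * real (card BP) + \<epsilon> * real (card BQ)"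
    using assms(3) by (simp add: distrib_left[symmetric] mult_left_mono)
  hence c1: "\<epsilon> * real (card H) \<le> 2 * real d" using cP cQ by simp
  have c2: "\<forall>i\<in>{..<n} - H. gP i \<le> \<epsilon> \<and> gQ i \<le> \<epsilon>"
    unfolding H_def BP_def BQ_def by auto
  show ?thesis
    using HN c1 c2 corr_identity[OF HN assms(14,15) m assms(16)]
    unfolding gP_def gQ_def by blast
qed

end
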